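(* Let $G$ be an $\alpha_1$-metric graph and $v$ an arbitrary vertex of $G$. If (i) $e(v)>rad(G)+1$, or (ii) $e(v)=rad(G)+1$ and $diam(G)<2rad(G)-1$, then there exists a neighbor $w$ of $v$ with $e(w)<e(v)$. Moreover, if $e(v)=rad(G)+k$ for some integer $k>0$, then $d(v,C(G))\le k+1$.
   Context: All graphs are finite, connected, unweighted, undirected, simple; $d(u,v)$ is the shortest-path distance. $I(u,v)=\{x: d(u,x)+d(x,v)=d(u,v)\}$. A graph is $\alpha_1$-metric if for all vertices $u,v,w,x$: whenever $v\in I(u,w)$, $w\in I(v,x)$ and $v,w$ are adjacent, then $d(u,x)\ge d(u,v)+d(v,x)-1$. $e(v)=\max_u d(u,v)$, $rad(G)=\min_v e(v)$, $diam(G)=\max_v e(v)$, $C(G)=\{v:e(v)=rad(G)\}$, and $d(v,S)=\min_{s\in S}d(v,s)$. *)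

theory Defs
  imports Main
begin

definition simple_graph :: "'a set \<Rightarrow> ('a \<Rightarrow> 'a \<Rightarrow> bool) \<Rightarrow> bool" where
  "simple_graph V E \<longleftrightarrow> finite V \<and> V \<noteq> {} \<and>
     (\<forall>u v. E u v \<longrightarrow> u \<in> V \<and> v \<in> V) \<and>
     (\<forall>u v. E u v \<longrightarrow> E v u) \<and> (\<forall>u. \<not> E u u)"

definition gwalk :: "('a \<Rightarrow> 'a \<Rightarrow> bool) \<Rightarrow> 'a list \<Rightarrow> bool" where
  "gwalk E p \<longleftrightarrow> p \<noteq> [] \<and> (\<forall>i. Suc i < length p \<longrightarrow> E (p ! i) (p ! Suc i))"

definition connected_graph :: "'a set \<Rightarrow> ('a \<Rightarrow> 'a \<Rightarrow> bool) \<Rightarrow> bool" where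
  "connected_graph V E \<longleftrightarrow> simple_graph V E \<and>
     (\<forall>u\<in>V. \<forall>v\<in>V. \<exists>p. gwalk E p \<and> hd p = u \<and> last p = v)"

definition gdist :: "('a \<Rightarrow> 'a \<Rightarrow> bool) \<Rightarrow> 'a \<Rightarrow> 'a \<Rightarrow> nat" where
  "gdist E u v = (LEAST n. \<exists>p. gwalk E p \<and> hd p = u \<and> last p = v \<and> length p = Suc n)"

definition interval :: "'a set \<Rightarrow> ('a \<Rightarrow> 'a \<Rightarrow> bool) \<Rightarrow> 'a \<Rightarrow> 'a \<Rightarrow> 'a set" where
  "interval V E u v = {x \<in> V. gdist E u x + gdist E x v = gdist E u v}"

definition alpha1_metric :: "'a set \<Rightarrow> ('a \<Rightarrow> 'a \<Rightarrow> bool) \<Rightarrow> bool" where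
  "alpha1_metric V E \<longleftrightarrow> (\<forall>u\<in>V. \<forall>v\<in>V. \<forall>w\<in>V. \<forall>x\<in>V.
     v \<in> interval V E u w \<and> w \<in> interval V E v x \<and> E v w \<longrightarrow>
     gdist E u x + 1 \<ge> gdist E u v + gdist E v x)"

definition ecc :: "'a set \<Rightarrow> ('a \<Rightarrow> 'a \<Rightarrow> bool) \<Rightarrow> 'a \<Rightarrow> nat" where
  "ecc V E v = Max ((\<lambda>u. gdist E u v) ` V)"

definition rad :: "'a set \<Rightarrow> ('a \<Rightarrow> 'a \<Rightarrow> bool) \<Rightarrow> nat" where
  "rad V E = Min (ecc V E ` V)"

definition diam :: "'a set \<Rightarrow> ('a \<Rightarrow> 'a \<Rightarrow> bool) \<Rightarrow> nat" where
  "diam V E = Max (ecc V E ` V)"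

definition center :: "'a set \<Rightarrow> ('a \<Rightarrow> 'a \<Rightarrow> bool) \<Rightarrow> 'a set" where
  "center V E = {v \<in> V. ecc V E v = rad V E}"

definition setdist :: "('a \<Rightarrow> 'a \<Rightarrow> bool) \<Rightarrow> 'a \<Rightarrow> 'a set \<Rightarrow> nat" where
  "setdist E v S = Min ((\<lambda>s. gdist E v s) ` S)"

end

theory Submission
  imports Defs
begin


lemma gwalk_Cons_Cons: "gwalk E (x # y # ys) \<longleftrightarrow> E x y \<and> gwalk E (y # ys)"
proof
  assume h: "gwalk E (x # y # ys)"
  have "E x y" using h unfolding gwalk_def by (metis Suc_less_eq length_Cons nth_Cons_0 nth_Cons_Suc zero_less_Suc)
  moreover have "gwalk E (y # ys)" unfolding gwalk_def
  proof (intro conjI allI impI)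
    fix i assume "Suc i < length (y # ys)"
    then have "Suc (Suc i) < length (x # y # ys)" by simp
    then have "E ((x # y # ys) ! Suc i) ((x # y # ys) ! Suc (Suc i))" using h unfolding gwalk_def by blast
    then show "E ((y # ys) ! i) ((y # ys) ! Suc i)" by simp
  qed simp
  ultimately show "E x y \<and> gwalk E (y # ys)" by blast
next
  assume h: "E x y \<and> gwalk E (y # ys)"
  show "gwalk E (x # y # ys)" unfolding gwalk_def
  proof (intro conjI allI impI)
    fix i assume i: "Suc i < length (x # y # ys)"
    show "E ((x # y # ys) ! i) ((x # y # ys) ! Suc i)"
    proof (cases i)
      case 0 then show ?thesis using h by simp
    next
      case (Suc j)
      then have "Suc j < length (y # ys)" using i by simp
      then have "E ((y # ys) ! j) ((y # ys) ! Suc j)" using h unfolding gwalk_def by blast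
      then show ?thesis using Suc by simp
    qed
  qed simp
qed

lemma gwalk_single[simp]: "gwalk E [x]"
  unfolding gwalk_def by simp

lemma gwalk_Cons: "gwalk E (x # xs) \<longleftrightarrow> (xs = [] \<or> (E x (hd xs) \<and> gwalk E xs))"
  by (cases xs) (auto simp: gwalk_Cons_Cons)

lemma gwalk_append:
  assumes "gwalk E p" "gwalk E q" "last p = hd q"
  shows "gwalk E (p @ tl q)"
  using assms
proof (induction p rule: list.induct)
  case Nil then show ?case by (simp add: gwalk_def)
next
  case (Cons x xs)
  show ?case
  proof (cases xs)
    case Nil
    then have "x = hd q" using Cons by simp
    then have "x # tl q = q" using Cons(3) unfolding gwalk_def by (metis list.collapse)
    then show ?thesis using Nil Cons by simp
  next
    case (Cons y ys)
    note Cons2 = this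
    have ih: "gwalk E (xs @ tl q)" using Cons.IH Cons.prems Cons2 by (simp add: gwalk_Cons_Cons)
    have "E x y" using Cons.prems Cons2 by (simp add: gwalk_Cons_Cons)
    then show ?thesis using ih Cons2 by (simp add: gwalk_Cons_Cons)
  qed
qed

lemma gwalk_rev:
  assumes "\<And>u v. E u v \<Longrightarrow> E v u" "gwalk E p"
  shows "gwalk E (rev p)"
  using assms(2)
proof (induction p rule: list.induct)
  case Nil then show ?case by (simp add: gwalk_def)
next
  case (Cons x xs)
  show ?case
  proof (cases xs)
    case Nil then show ?thesis by simp
  next
    case (Cons y ys)
    note Cons2 = this
    have ih: "gwalk E (rev xs)" using Cons.IH Cons.prems Cons2 by (simp add: gwalk_Cons_Cons)
    have "E x y" using Cons.prems Cons2 by (simp add: gwalk_Cons_Cons)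
    then have "E y x" using assms(1) by blast
    have "gwalk E [y, x]" using \<open>E y x\<close> by (simp add: gwalk_Cons_Cons)
    have "rev (x # xs) = rev xs @ tl [y, x]" by simp
    moreover have "last (rev xs) = hd [y, x]" using Cons2 by simp
    ultimately show ?thesis using gwalk_append[OF ih \<open>gwalk E [y, x]\<close>] by simp
  qed
qed

locale cg =
  fixes V :: "'a set" and E :: "'a \<Rightarrow> 'a \<Rightarrow> bool"
  assumes conn: "connected_graph V E"
begin

lemma finV: "finite V" and neV: "V \<noteq> {}" and EV: "E u v \<Longrightarrow> u \<in> V \<and> v \<in> V"
  and Esym: "E u v \<Longrightarrow> E v u" and Eirr: "\<not> E u u"
  using conn unfolding connected_graph_def simple_graph_def by blast+

lemma walk_ex: "u \<in> V \<Longrightarrow> v \<in> V \<Longrightarrow> \<exists>p. gwalk E p \<and> hd p = u \<and> last p = v"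
  using conn unfolding connected_graph_def by blast

abbreviation d where "d u v \<equiv> gdist E u v"

lemma dist_witness:
  assumes "u \<in> V" "v \<in> V"
  shows "\<exists>p. gwalk E p \<and> hd p = u \<and> last p = v \<and> length p = Suc (d u v)"
proof -
  obtain p where p: "gwalk E p" "hd p = u" "last p = v" using walk_ex assms by blast
  then have ne: "p \<noteq> []" unfolding gwalk_def by blast
  then have "\<exists>n p. gwalk E p \<and> hd p = u \<and> last p = v \<and> length p = Suc n"
    using p by (metis Suc_pred length_greater_0_conv)
  then show ?thesis unfolding gdist_def by (rule LeastI_ex)
qed

lemma dist_le:
  assumes "gwalk E p" "hd p = u" "last p = v"
  shows "d u v \<le> length p - 1"
proof -
  have ne: "p \<noteq> []" using assms unfolding gwalk_def by blast
  then have "length p = Suc (length p - 1)" by simp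
  then show ?thesis unfolding gdist_def using assms by (intro Least_le) blast
qed

lemma d_refl[simp]: "d u u = 0"
  using dist_le[of "[u]" u u] by simp

lemma d_sym: assumes "u \<in> V" "v \<in> V" shows "d u v = d v u"
proof -
  have *: "d a b \<le> d b a" if a: "a \<in> V" and b: "b \<in> V" for a b
  proof -
    obtain p where p: "gwalk E p" "hd p = b" "last p = a" "length p = Suc (d b a)"
      using dist_witness[OF b a] by blast
    have ne: "p \<noteq> []" using p unfolding gwalk_def by blast
    have "gwalk E (rev p)" using gwalk_rev[OF _ p(1)] Esym by blast
    moreover have "hd (rev p) = a" "last (rev p) = b" using p ne by (auto simp: hd_rev last_rev)
    ultimately have "d a b \<le> length (rev p) - 1" using dist_le by blast
    then show ?thesis using p by simp
  qed
  show ?thesis using *[OF assms] *[OF assms(2,1)] by simp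
qed

lemma d_tri: assumes "u \<in> V" "v \<in> V" "w \<in> V" shows "d u w \<le> d u v + d v w"
proof -
  obtain p where p: "gwalk E p" "hd p = u" "last p = v" "length p = Suc (d u v)"
    using dist_witness[OF assms(1,2)] by blast
  obtain q where q: "gwalk E q" "hd q = v" "last q = w" "length q = Suc (d v w)"
    using dist_witness[OF assms(2,3)] by blast
  have w: "gwalk E (p @ tl q)" using gwalk_append[OF p(1) q(1)] p(3) q(2) by simp
  have ne: "p \<noteq> []" "q \<noteq> []" using p q unfolding gwalk_def by blast+
  have "hd (p @ tl q) = u" using p ne by simp
  moreover have "last (p @ tl q) = w"
  proof (cases "tl q")
    case Nil then have "q = [hd q]" using ne by (metis list.collapse)
    then show ?thesis using p q Nil by (metis append_Nil2 last_ConsL)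
  next
    case (Cons a l) then show ?thesis using q ne by (metis append_is_Nil_conv last_appendR last_tl list.distinct(1))
  qed
  ultimately have "d u w \<le> length (p @ tl q) - 1" using dist_le w by blast
  then show ?thesis using p q by simp
qed

lemma d_eq0: assumes "u \<in> V" "v \<in> V" "d u v = 0" shows "u = v"
proof -
  obtain p where p: "gwalk E p" "hd p = u" "last p = v" "length p = Suc 0"
    using dist_witness assms by fastforce
  then obtain x where "p = [x]" by (metis length_0_conv length_Suc_conv)
  then show ?thesis using p by simp
qed

lemma d_adj: assumes "E u v" shows "d u v = 1"
proof -
  have uv: "u \<in> V" "v \<in> V" using EV assms by blast+
  have "gwalk E [u, v]" using assms by (simp add: gwalk_Cons_Cons)
  then have "d u v \<le> 1" using dist_le[of "[u,v]" u v] by simp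
  moreover have "u \<noteq> v" using Eirr assms by blast
  then have "d u v \<noteq> 0" using d_eq0 uv by blast
  ultimately show ?thesis by simp
qed

lemma d_one: assumes "u \<in> V" "v \<in> V" "d u v = 1" shows "E u v"
proof -
  obtain p where p: "gwalk E p" "hd p = u" "last p = v" "length p = Suc 1"
    using dist_witness assms by fastforce
  then obtain x y where "p = [x, y]" by (metis One_nat_def length_0_conv length_Suc_conv)
  then show ?thesis using p by (simp add: gwalk_Cons_Cons)
qed

lemma step_toward:
  assumes "u \<in> V" "v \<in> V" "d u v = Suc n"
  shows "\<exists>w. E u w \<and> d w v = n"
proof -
  obtain p where p: "gwalk E p" "hd p = u" "last p = v" "length p = Suc (Suc n)"
    using dist_witness assms by fastforce
  then obtain x y ys where pe: "p = x # y # ys" by (metis length_Suc_conv)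
  have "E u y" using p pe by (simp add: gwalk_Cons_Cons)
  have wy: "gwalk E (y # ys)" using p pe by (simp add: gwalk_Cons_Cons)
  have "d y v \<le> length (y # ys) - 1" using dist_le[OF wy] p pe by simp
  then have le: "d y v \<le> n" using p pe by simp
  have yV: "y \<in> V" using EV \<open>E u y\<close> by blast
  have "Suc n \<le> d u y + d y v" using d_tri[OF assms(1) yV assms(2)] assms(3) by simp
  then have "d y v \<ge> n" using d_adj[OF \<open>E u y\<close>] by simp
  then show ?thesis using le \<open>E u y\<close> by (intro exI[of _ y]) simp
qed

lemma adj_diff: assumes "E u w" "x \<in> V" shows "d u x \<le> d w x + 1" "d w x \<le> d u x + 1"
proof -
  have V: "u \<in> V" "w \<in> V" using EV assms by blast+
  show "d u x \<le> d w x + 1" using d_tri[OF V(1) V(2) assms(2)] d_adj[OF assms(1)] by simp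
  have "E w u" using Esym assms by blast
  show "d w x \<le> d u x + 1" using d_tri[OF V(2) V(1) assms(2)] d_adj[OF \<open>E w u\<close>] by simp
qed


lemma ecc_ge: "u \<in> V \<Longrightarrow> d u v \<le> ecc V E v"
  unfolding ecc_def using finV by (intro Max_ge) auto

lemma ecc_att: "\<exists>u\<in>V. d u v = ecc V E v"
proof -
  have "ecc V E v \<in> (\<lambda>u. d u v) ` V" unfolding ecc_def using finV neV by (intro Max_in) auto
  then show ?thesis by auto
qed

lemma rad_le: "v \<in> V \<Longrightarrow> rad V E \<le> ecc V E v"
  unfolding rad_def using finV by (intro Min_le) auto

lemma rad_att: "\<exists>c\<in>V. ecc V E c = rad V E"
proof -
  have "rad V E \<in> ecc V E ` V" unfolding rad_def using finV neV by (intro Min_in) auto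
  then show ?thesis by auto
qed

lemma diam_ge: "v \<in> V \<Longrightarrow> ecc V E v \<le> diam V E"
  unfolding diam_def using finV by (intro Max_ge) auto

lemma ecc_adj: assumes "E v w" shows "ecc V E w \<le> ecc V E v + 1"
proof -
  obtain u where u: "u \<in> V" "d u w = ecc V E w" using ecc_att by blast
  have V: "v \<in> V" "w \<in> V" using EV assms by blast+
  have "d u w \<le> d u v + d v w" using d_tri[OF u(1) V(1) V(2)] .
  also have "\<dots> = d u v + 1" using d_adj[OF assms] by simp
  also have "d u v \<le> ecc V E v" using ecc_ge[OF u(1)] .
  finally show ?thesis using u by simp
qed

lemma part2:
  assumes a1: "alpha1_metric V E" and vV: "v \<in> V" and k: "k > 0" and ev: "ecc V E v = rad V E + k"
  shows "setdist E v (center V E) \<le> k + 1"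
proof -
  let ?C = "center V E"
  have finC: "finite ?C" using finV unfolding center_def by simp
  have neC: "?C \<noteq> {}" using rad_att unfolding center_def by blast
  obtain c where c: "c \<in> ?C" "d v c = setdist E v ?C"
  proof -
    have "setdist E v ?C \<in> (\<lambda>s. d v s) ` ?C" unfolding setdist_def using finC neC by (intro Min_in) auto
    then show ?thesis using that by auto
  qed
  have cmin: "d v c \<le> d v c'" if "c' \<in> ?C" for c'
    using c(2) that finC unfolding setdist_def by (metis Min_le finite_imageI image_eqI)
  have cV: "c \<in> V" and ec: "ecc V E c = rad V E" using c(1) unfolding center_def by auto
  show ?thesis
  proof (rule ccontr)
    assume "\<not> ?thesis"
    then have big: "d v c \<ge> k + 2" using c(2) by simp
    then obtain m where m: "d c v = Suc m" using d_sym[OF vV cV] by (metis add_2_eq_Suc' le_add_diff_inverse2 le_add2 le_trans Suc_diff_le)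
    obtain c' where c': "E c c'" "d c' v = m" using step_toward[OF cV vV m] by blast
    have c'V: "c' \<in> V" using EV c' by blast
    have "c' \<notin> ?C"
    proof
      assume "c' \<in> ?C"
      then have "d v c \<le> d v c'" using cmin by blast
      then show False using c' m d_sym[OF vV cV] d_sym[OF vV c'V] by simp
    qed
    then have "ecc V E c' \<noteq> rad V E" using c'V unfolding center_def by blast
    then have gt: "ecc V E c' > rad V E" using rad_le[OF c'V] by simp
    obtain u where u: "u \<in> V" "d u c' = ecc V E c'" using ecc_att by blast
    have "d u c \<le> rad V E" using ecc_ge[OF u(1), of c] ec by simp
    moreover have "d u c' \<le> d u c + 1" using adj_diff(2)[OF c'(1), of u] d_sym u(1) cV c'V by simp
    ultimately have duc: "d u c = rad V E" "d u c' = rad V E + 1" using u gt by simp_all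
    have "c \<in> interval V E u c'" unfolding interval_def using cV duc d_adj[OF c'(1)] by simp
    moreover have "c' \<in> interval V E c v" unfolding interval_def using c'V c' m d_adj[OF c'(1)] by simp
    ultimately have "d u v + 1 \<ge> d u c + d c v" using a1 c'(1) u(1) cV c'V vV unfolding alpha1_metric_def by blast
    moreover have "d u v \<le> rad V E + k" using ecc_ge[OF u(1), of v] ev by simp
    ultimately have "d c v \<le> k + 1" using duc by simp
    then show False using big d_sym[OF vV cV] by simp
  qed
qed


lemma d_ge_adj: assumes "E v w" "x \<in> V" shows "d v x \<le> d w x + 1" "d w x \<le> d v x + 1"
  using adj_diff[OF assms] by auto

end

locale ag = cg +
  assumes alpha: "alpha1_metric V E"
begin

lemma a1:
  assumes V: "u \<in> V" "v \<in> V" "w \<in> V" "x \<in> V" and e: "E v w"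
    and i1: "d u v + d v w = d u w" and i2: "d v w + d w x = d v x"
  shows "d u v + d v x \<le> d u x + 1"
proof -
  have "v \<in> interval V E u w" unfolding interval_def using V i1 by simp
  moreover have "w \<in> interval V E v x" unfolding interval_def using V i2 by simp
  ultimately show ?thesis using alpha V e unfolding alpha1_metric_def by blast
qed

lemma clique:
  assumes "E v y" "E v y'" "t \<in> V" "d y t + 1 = d v t" "d y' t + 1 = d v t"
  shows "y = y' \<or> E y y'"
proof (rule ccontr)
  assume c: "\<not> (y = y' \<or> E y y')"
  have V: "v \<in> V" "y \<in> V" "y' \<in> V" using EV assms by blast+
  have "d y y' \<le> d y v + d v y'" using d_tri V by blast
  moreover have "d y v = 1" using d_adj Esym assms(1) by blast
  moreover have "d v y' = 1" using d_adj assms(2) by blast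
  moreover have "d y y' \<noteq> 0" using d_eq0 V c by blast
  moreover have "d y y' \<noteq> 1" using d_one V c by blast
  ultimately have yy: "d y y' = 2" by simp
  have "d y v + d v y' = d y y'" using yy \<open>d y v = 1\<close> \<open>d v y' = 1\<close> by simp
  moreover have "d v y' + d y' t = d v t" using assms(5) \<open>d v y' = 1\<close> by simp
  ultimately have "d y v + d v t \<le> d y t + 1" using a1[OF V(2) V(1) V(3) assms(3) assms(2)] by blast
  then show False using assms(4) \<open>d y v = 1\<close> by simp
qed

lemma pairP:
  assumes vV: "v \<in> V"
  shows "\<forall>t t'. t \<in> V \<longrightarrow> t' \<in> V \<longrightarrow> d t t' = L \<longrightarrow> L + 4 \<le> d v t + d v t' \<longrightarrow>
          (\<exists>w. E v w \<and> d w t + 1 = d v t \<and> d w t' + 1 = d v t')"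
proof (induction L)
  case 0
  show ?case
  proof (intro allI impI)
    fix t t' assume tV: "t \<in> V" and t'V: "t' \<in> V" and dt: "d t t' = 0" and le: "0 + 4 \<le> d v t + d v t'"
    have "t = t'" using d_eq0 tV t'V dt by blast
    then have "d v t \<ge> 2" using le by simp
    then obtain n where "d v t = Suc n" by (metis Suc_le_D numeral_2_eq_2)
    then obtain w where "E v w" "d w t = n" using step_toward vV tV by blast
    then show "\<exists>w. E v w \<and> d w t + 1 = d v t \<and> d w t' + 1 = d v t'"
      using \<open>t = t'\<close> \<open>d v t = Suc n\<close> by auto
  qed
next
  case (Suc L)
  show ?case
  proof (intro allI impI)
    fix t t' assume tV: "t \<in> V" and t'V: "t' \<in> V" and dt: "d t t' = Suc L" and le: "Suc L + 4 \<le> d v t + d v t'"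
    define a where "a = d v t"
    define b where "b = d v t'"
    have tri1: "b \<le> a + Suc L" using d_tri[OF vV tV t'V] dt unfolding a_def b_def by simp
    have tri2: "a \<le> b + Suc L" using d_tri[OF vV t'V tV] dt d_sym[OF tV t'V] unfolding a_def b_def by simp
    have a2: "a \<ge> 2" using le tri1 unfolding a_def b_def by simp
    have b2: "b \<ge> 2" using le tri2 unfolding a_def b_def by simp
    obtain q where q: "E t q" "d q t' = L" using step_toward[OF tV t'V dt] by blast
    have qV: "q \<in> V" using EV q(1) by blast
    define a1' where "a1' = d v q"
    have "a \<le> a1' + 1" using d_tri[OF vV qV tV] d_adj[OF Esym[OF q(1)]] unfolding a_def a1'_def by simp
    then have "L + 4 \<le> d v q + d v t'" using le unfolding a_def b_def a1'_def by simp
    then obtain w where w: "E v w" "d w q + 1 = a1'" "d w t' + 1 = b"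
      using Suc.IH qV t'V q(2) unfolding a1'_def b_def by blast
    have wV: "w \<in> V" using EV w(1) by blast
    obtain n where n: "a = Suc n" using a2 by (metis Suc_le_D numeral_2_eq_2)
    obtain y where y: "E v y" "d y t = n" using step_toward[OF vV tV] n unfolding a_def by blast
    have yV: "y \<in> V" using EV y(1) by blast
    show "\<exists>w. E v w \<and> d w t + 1 = d v t \<and> d w t' + 1 = d v t'"
    proof (cases "d y t' + 1 = b \<or> d w t + 1 = a")
      case True
      then show ?thesis using y w n unfolding a_def b_def by auto
    next
      case False
      then have ny: "d y t' + 1 \<noteq> b" and nw: "d w t + 1 \<noteq> a" by auto
      have dvy: "d v y = 1" using d_adj y(1) by blast
      have dyv: "d y v = 1" using d_adj Esym y(1) by blast
      have dvw: "d v w = 1" using d_adj w(1) by blast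
      have dwv: "d w v = 1" using d_adj Esym w(1) by blast
      have "d v t' \<le> d v y + d y t'" using d_tri vV yV t'V by blast
      then have yt'1: "d y t' \<ge> b" using ny dvy unfolding b_def by simp
      have "d y t' \<le> d y v + d v t'" using d_tri yV vV t'V by blast
      then have "d y t' \<le> b + 1" using dyv unfolding b_def by simp
      have yt': "d y t' = b"
      proof (rule ccontr)
        assume "d y t' \<noteq> b"
        then have e1: "d y t' = b + 1" using yt'1 \<open>d y t' \<le> b + 1\<close> by simp
        have "d t' v + d v y = d t' y" using e1 d_sym[OF yV t'V] d_sym[OF vV t'V] dvy unfolding b_def by simp
        moreover have "d v y + d y t = d v t" using y n dvy unfolding a_def by simp
        ultimately have "d t' v + d v t \<le> d t' t + 1" using a1[OF t'V vV yV tV y(1)] by blast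
        then show False using le dt d_sym[OF vV t'V] d_sym[OF tV t'V] unfolding a_def b_def by simp
      qed
      have "d v t \<le> d v w + d w t" using d_tri vV wV tV by blast
      then have wt1: "d w t \<ge> a" using nw dvw unfolding a_def by simp
      have "d w t \<le> d w v + d v t" using d_tri wV vV tV by blast
      then have "d w t \<le> a + 1" using dwv unfolding a_def by simp
      have wt: "d w t = a"
      proof (rule ccontr)
        assume "d w t \<noteq> a"
        then have e1: "d w t = a + 1" using wt1 \<open>d w t \<le> a + 1\<close> by simp
        have "d t v + d v w = d t w" using e1 d_sym[OF wV tV] d_sym[OF vV tV] dvw unfolding a_def by simp
        moreover have "d v w + d w t' = d v t'" using w(3) dvw unfolding b_def by simp
        ultimately have "d t v + d v t' \<le> d t t' + 1" using a1[OF tV vV wV t'V w(1)] by blast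
        then show False using le dt d_sym[OF vV tV] unfolding a_def b_def by simp
      qed
      have nyw: "\<not> E y w"
      proof
        assume ey: "E y w"
        have dyw: "d y w = 1" using d_adj ey by blast
        have "d t y + d y w = d t w" using y n dyw wt d_sym[OF yV tV] d_sym[OF wV tV] unfolding a_def by simp
        moreover have "d y w + d w t' = d y t'" using dyw w(3) yt' by simp
        ultimately have "d t y + d y t' \<le> d t t' + 1" using a1[OF tV yV wV t'V ey] by blast
        then show False using le dt yt' y n d_sym[OF yV tV] unfolding a_def b_def by simp
      qed
      have "y \<noteq> w" using y wt n by auto
      have "d y w \<le> d y v + d v w" using d_tri yV vV wV by blast
      moreover have "d y w \<noteq> 0" using d_eq0 yV wV \<open>y \<noteq> w\<close> by blast
      moreover have "d y w \<noteq> 1" using d_one yV wV nyw by blast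
      ultimately have dyw2: "d y w = 2" using dyv dvw by simp
      have dwy2: "d w y = 2" using dyw2 d_sym[OF yV wV] by simp
      have "d q w + d w v = d q v" using w(2) dwv d_sym[OF wV qV] d_sym[OF vV qV] unfolding a1'_def by simp
      moreover have "d w v + d v y = d w y" using dwv dvy dwy2 by simp
      ultimately have "d q w + d w y \<le> d q y + 1" using a1[OF qV wV vV yV Esym[OF w(1)]] by blast
      then have qy: "d q y \<ge> a1'" using w(2) dwy2 d_sym[OF wV qV] by simp
      have "d q y \<le> d q t + d t y" using d_tri qV tV yV by blast
      moreover have "d q t = 1" using d_adj Esym[OF q(1)] by blast
      ultimately have "d q y \<le> a" using y n d_sym[OF yV tV] unfolding a_def by simp
      then have a1le: "a1' \<le> a" using qy by simp
      have "a1' + 1 \<ge> a" using \<open>a \<le> a1' + 1\<close> .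
      show ?thesis
      proof (cases "a1' + 1 = a")
        case True
        have "d w t \<le> d w q + d q t" using d_tri wV qV tV by blast
        then have "d w t \<le> a1'" using w(2) \<open>d q t = 1\<close> by simp
        then show ?thesis using wt True by simp
      next
        case False
        then have aa: "a1' = a" using a1le \<open>a1' + 1 \<ge> a\<close> by simp
        have dqy: "d q y = a" using qy \<open>d q y \<le> a\<close> aa by simp
        have "d y t + d t q = d y q" using y n dqy d_adj[OF q(1)] d_sym[OF yV qV] unfolding a_def by simp
        moreover have "d t q + d q w = d t w" using d_adj[OF q(1)] w(2) aa wt d_sym[OF wV qV] d_sym[OF wV tV] by simp
        ultimately have "d y t + d t w \<le> d y w + 1" using a1[OF yV tV qV wV q(1)] by blast
        then have "a \<le> 2" using y n wt d_sym[OF wV tV] dyw2 by simp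
        then have "a = 2" using a2 by simp
        have "d y t' \<le> d y t + d t t'" using d_tri yV tV t'V by blast
        then show ?thesis using yt' y n dt le \<open>a = 2\<close> unfolding a_def b_def by simp
      qed
    qed
  qed
qed


lemma away_excl:
  assumes "E v y" "s \<in> V" "t \<in> V" "d y t + 1 = d v t" "d y s = d v s + 1"
  shows "d v s + d v t \<le> d s t + 1"
proof -
  have V: "v \<in> V" "y \<in> V" using EV assms(1) by blast+
  have dvy: "d v y = 1" using d_adj assms(1) by blast
  have "d s v + d v y = d s y" using assms(5) dvy d_sym[OF V(1) assms(2)] d_sym[OF V(2) assms(2)] by simp
  moreover have "d v y + d y t = d v t" using assms(4) dvy by simp
  ultimately have "d s v + d v t \<le> d s t + 1" using a1[OF assms(2) V(1) V(2) assms(3) assms(1)] by blast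
  then show ?thesis using d_sym[OF V(1) assms(2)] by simp
qed

lemma helly:
  assumes vV: "v \<in> V"
  shows "finite T \<Longrightarrow> T \<noteq> {} \<Longrightarrow> T \<subseteq> V \<Longrightarrow> (\<forall>t\<in>T. d v t \<ge> 1) \<Longrightarrow>
    (\<forall>t\<in>T. \<forall>t'\<in>T. t \<noteq> t' \<longrightarrow> d t t' + 4 \<le> d v t + d v t') \<Longrightarrow>
    \<exists>y. E v y \<and> (\<forall>t\<in>T. d y t + 1 = d v t)"
proof (induction "card T" arbitrary: T rule: less_induct)
  case less
  note fin = less.prems(1) and ne = less.prems(2) and sub = less.prems(3) and pos = less.prems(4)
    and pw = less.prems(5)
  obtain t0 where t0: "t0 \<in> T" using ne by blast
  show ?case
  proof (cases "T = {t0}")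
    case True
    have t0V: "t0 \<in> V" using sub t0 by blast
    obtain n where n: "d v t0 = Suc n" using pos t0 by (metis Suc_le_D One_nat_def)
    obtain y where "E v y" "d y t0 = n" using step_toward[OF vV t0V n] by blast
    then show ?thesis using True n by auto
  next
    case False
    then obtain t1 where t1: "t1 \<in> T" "t1 \<noteq> t0" using t0 ne by blast
    show ?thesis
    proof (cases "T = {t0, t1}")
      case True
      have V: "t0 \<in> V" "t1 \<in> V" using sub t0 t1 by blast+
      have "d t0 t1 + 4 \<le> d v t0 + d v t1" using pw t0 t1 by metis
      then obtain w where "E v w" "d w t0 + 1 = d v t0" "d w t1 + 1 = d v t1"
        using pairP[OF vV] V by blast
      then show ?thesis using True by auto
    next
      case False
      then obtain t2 where t2: "t2 \<in> T" "t2 \<noteq> t0" "t2 \<noteq> t1" using t0 t1 by blast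
      have c0: "card (T - {t0}) < card T" using fin t0 by (meson card_Diff1_less)
      have c1: "card (T - {t1}) < card T" using fin t1 by (meson card_Diff1_less)
      obtain y0 where y0: "E v y0" "\<forall>t\<in>T - {t0}. d y0 t + 1 = d v t"
        using less.hyps[OF c0] fin sub pos pw t1 by (auto simp: subset_iff)
      obtain y1 where y1: "E v y1" "\<forall>t\<in>T - {t1}. d y1 t + 1 = d v t"
        using less.hyps[OF c1] fin sub pos pw t0 t1 by (auto simp: subset_iff)
      show ?thesis
      proof (cases "d y0 t0 + 1 = d v t0")
        case True then show ?thesis using y0 by blast
      next
        case F0: False
        show ?thesis
        proof (cases "d y1 t1 + 1 = d v t1")
          case True then show ?thesis using y1 by blast
        next
          case F1: False
          have V: "t0 \<in> V" "t1 \<in> V" "t2 \<in> V" "y0 \<in> V" "y1 \<in> V"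
            using sub t0 t1 t2 EV y0(1) y1(1) by blast+
          have y02: "d y0 t2 + 1 = d v t2" using y0 t2 by blast
          have y12: "d y1 t2 + 1 = d v t2" using y1 t2 by blast
          have y01: "d y0 t1 + 1 = d v t1" using y0 t1 by blast
          have y10: "d y1 t0 + 1 = d v t0" using y1 t0 t1 by blast
          have "y0 = y1 \<or> E y0 y1" using clique[OF y0(1) y1(1) V(3) y02 y12] .
          moreover have "y0 \<noteq> y1" using F0 y10 by auto
          ultimately have e01: "E y0 y1" by blast
          have p01: "d t0 t1 + 4 \<le> d v t0 + d v t1" using pw t0 t1 by metis
          have "d v t0 \<le> d v y0 + d y0 t0" using d_tri vV V(4) V(1) by blast
          then have g0: "d y0 t0 \<ge> d v t0" using F0 d_adj[OF y0(1)] by simp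
          have "d y0 t0 \<le> d y0 v + d v t0" using d_tri V(4) vV V(1) by blast
          then have "d y0 t0 \<le> d v t0 + 1" using d_adj[OF Esym[OF y0(1)]] by simp
          have y0t0: "d y0 t0 = d v t0"
          proof (rule ccontr)
            assume "d y0 t0 \<noteq> d v t0"
            then have "d y0 t0 = d v t0 + 1" using g0 \<open>d y0 t0 \<le> d v t0 + 1\<close> by simp
            then have "d v t0 + d v t1 \<le> d t0 t1 + 1" using away_excl[OF y0(1) V(1) V(2) y01] by blast
            then show False using p01 by simp
          qed
          have "d v t1 \<le> d v y1 + d y1 t1" using d_tri vV V(5) V(2) by blast
          then have g1: "d y1 t1 \<ge> d v t1" using F1 d_adj[OF y1(1)] by simp
          have "d y1 t1 \<le> d y1 v + d v t1" using d_tri V(5) vV V(2) by blast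
          then have "d y1 t1 \<le> d v t1 + 1" using d_adj[OF Esym[OF y1(1)]] by simp
          have y1t1: "d y1 t1 = d v t1"
          proof (rule ccontr)
            assume "d y1 t1 \<noteq> d v t1"
            then have "d y1 t1 = d v t1 + 1" using g1 \<open>d y1 t1 \<le> d v t1 + 1\<close> by simp
            then have "d v t1 + d v t0 \<le> d t1 t0 + 1" using away_excl[OF y1(1) V(2) V(1) y10] by blast
            then show False using p01 d_sym[OF V(1) V(2)] by simp
          qed
          have d01: "d y0 y1 = 1" using d_adj e01 by blast
          have "d t1 y0 + d y0 y1 = d t1 y1" using y01 y1t1 d01 d_sym[OF V(4) V(2)] d_sym[OF V(5) V(2)] by simp
          moreover have "d y0 y1 + d y1 t0 = d y0 t0" using d01 y10 y0t0 by simp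
          ultimately have "d t1 y0 + d y0 t0 \<le> d t1 t0 + 1" using a1[OF V(2) V(4) V(5) V(1) e01] by blast
          then show ?thesis using p01 y01 y0t0 d_sym[OF V(4) V(2)] d_sym[OF V(1) V(2)] by simp
        qed
      qed
    qed
  qed
qed

lemma diam_le: "diam V E \<le> 2 * rad V E"
proof -
  obtain x where x: "x \<in> V" "ecc V E x = diam V E"
  proof -
    have "diam V E \<in> ecc V E ` V" unfolding diam_def using finV neV by (intro Max_in) auto
    then show ?thesis using that by auto
  qed
  obtain u where u: "u \<in> V" "d u x = ecc V E x" using ecc_att by blast
  obtain c where c: "c \<in> V" "ecc V E c = rad V E" using rad_att by blast
  have "d u x \<le> d u c + d c x" using d_tri u(1) c(1) x(1) by blast
  also have "d u c \<le> rad V E" using ecc_ge[OF u(1), of c] c by simp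
  also have "d c x \<le> rad V E" using ecc_ge[OF x(1), of c] c d_sym[OF c(1) x(1)] by simp
  finally show ?thesis using u x by simp
qed

lemma part1:
  assumes vV: "v \<in> V" and dm: "diam V E + 4 \<le> 2 * ecc V E v" and pos: "ecc V E v \<ge> 1"
  shows "\<exists>w. E v w \<and> ecc V E w < ecc V E v"
proof -
  define e where "e = ecc V E v"
  define T where "T = {t \<in> V. d v t = e}"
  have fin: "finite T" unfolding T_def using finV by simp
  obtain u where u: "u \<in> V" "d u v = e" using ecc_att unfolding e_def by blast
  have "u \<in> T" unfolding T_def using u d_sym[OF u(1) vV] by simp
  then have ne: "T \<noteq> {}" by blast
  have sub: "T \<subseteq> V" unfolding T_def by blast
  have dd: "d s t \<le> diam V E" if "s \<in> V" "t \<in> V" for s t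
    using ecc_ge[OF that(1), of t] diam_ge[OF that(2)] by simp
  have pw: "\<forall>t\<in>T. \<forall>t'\<in>T. t \<noteq> t' \<longrightarrow> d t t' + 4 \<le> d v t + d v t'"
    using dd dm unfolding T_def e_def by fastforce
  have posT: "\<forall>t\<in>T. d v t \<ge> 1" using pos unfolding T_def e_def by simp
  obtain y where y: "E v y" "\<forall>t\<in>T. d y t + 1 = d v t" using helly[OF vV fin ne sub posT pw] by blast
  have yV: "y \<in> V" using EV y(1) by blast
  obtain s where s: "s \<in> V" "d s y = ecc V E y" using ecc_att by blast
  have "d y s \<le> e - 1"
  proof -
    have dsv: "d v s \<le> e" using ecc_ge[OF s(1), of v] d_sym[OF s(1) vV] unfolding e_def by simp
    have ub: "d y s \<le> d v s + 1" using d_ge_adj(2)[OF y(1) s(1)] .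
    show ?thesis
    proof (cases "d v s = e")
      case True
      then have "s \<in> T" unfolding T_def using s by simp
      then show ?thesis using y(2) True by fastforce
    next
      case False
      show ?thesis
      proof (cases "d y s = e")
        case True
        then have "d v s + 1 = e" using ub False dsv by simp
        then have ys: "d y s = d v s + 1" using True by simp
        have uT: "u \<in> T" by fact
        have "d v s + d v u \<le> d s u + 1"
          using away_excl[OF y(1) s(1) u(1) _ ys] y(2) uT by blast
        moreover have "d s u \<le> diam V E" using dd s(1) u(1) by blast
        moreover have "d v u = e" using uT unfolding T_def by simp
        ultimately show ?thesis using dm \<open>d v s + 1 = e\<close> unfolding e_def by simp
      next
        case False2: False
        then show ?thesis using ub dsv False by simp
      qed
    qed
  qed
  then have "ecc V E y < e" using s d_sym[OF s(1) yV] pos unfolding e_def by simp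
  then show ?thesis using y(1) unfolding e_def by blast
qed

end

theorem theorem6:
  fixes V :: "'a set" and E :: "'a \<Rightarrow> 'a \<Rightarrow> bool" and v :: 'a
  assumes "connected_graph V E" and "alpha1_metric V E" and "v \<in> V"
  shows "((ecc V E v > rad V E + 1 \<or>
           (ecc V E v = rad V E + 1 \<and> int (diam V E) < 2 * int (rad V E) - 1))
          \<longrightarrow> (\<exists>w. E v w \<and> ecc V E w < ecc V E v))
       \<and> (\<forall>k::nat. k > 0 \<and> ecc V E v = rad V E + k
          \<longrightarrow> setdist E v (center V E) \<le> k + 1)"
proof -
  interpret ag V E using assms(1,2) by (simp add: ag_def cg_def ag_axioms_def)
  have P1: "(ecc V E v > rad V E + 1 \<or>
           (ecc V E v = rad V E + 1 \<and> int (diam V E) < 2 * int (rad V E) - 1))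
          \<longrightarrow> (\<exists>w. E v w \<and> ecc V E w < ecc V E v)"
  proof
    assume H: "ecc V E v > rad V E + 1 \<or>
           (ecc V E v = rad V E + 1 \<and> int (diam V E) < 2 * int (rad V E) - 1)"
    have dl: "diam V E \<le> 2 * rad V E" using diam_le .
    have "diam V E + 4 \<le> 2 * ecc V E v \<and> ecc V E v \<ge> 1"
      using H
    proof
      assume "ecc V E v > rad V E + 1"
      then show ?thesis using dl by simp
    next
      assume h: "ecc V E v = rad V E + 1 \<and> int (diam V E) < 2 * int (rad V E) - 1"
      then have "diam V E + 2 \<le> 2 * rad V E" by linarith
      then show ?thesis using h by simp
    qed
    then show "\<exists>w. E v w \<and> ecc V E w < ecc V E v" using part1[OF assms(3)] by blast
  qed
  have P2: "\<forall>k::nat. k > 0 \<and> ecc V E v = rad V E + k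
          \<longrightarrow> setdist E v (center V E) \<le> k + 1"
    using part2[OF assms(2) assms(3)] by blast
  show ?thesis using P1 P2 by blast
qed

end
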